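(* Let $n$ be a positive even integer. For $m=1,\dots,n+1$ and $k=1,\dots,\tfrac n2+1$ put $x_m=\cos\frac{m\pi}{n+2}$ and $y_{m,k}=\cos\frac{2k\pi}{n+3}$ if $m$ is odd, $y_{m,k}=\cos\frac{(2k-1)\pi}{n+3}$ if $m$ is even. For non-negative integers $i,j$ let $$I(i,j):=\sum_{m=1}^{n+1}\sum_{k=1}^{\frac n2+1}(1-x_m^2)(1-y_{m,k}^2)\,U_i(x_m)\,U_j(y_{m,k}).$$ If $i$ is such that $n+2$ divides neither $i$ nor $i+2$, or $j$ is such that $n+3$ divides neither $j$ nor $j+2$, then $I(i,j)=0$. In all other cases, with $\mu,\nu$ integers and $C_n=\frac{8}{(n+2)(n+3)}$, $$I(i,j)=\begin{cases}(2C_n)^{-1}[(-1)^\nu+(-1)^\mu], & i=\nu(n+2),\ j=\mu(n+3),\\ -(2C_n)^{-1}[(-1)^\nu+(-1)^\mu], & i=\nu(n+2),\ j=\mu(n+3)-2,\\ -(2C_n)^{-1}[(-1)^\nu+(-1)^\mu], & i=\nu(n+2)-2,\ j=\mu(n+3),\\ (2C_n)^{-1}[(-1)^\nu+(-1)^\mu], & i=\nu(n+2)-2,\ j=\mu(n+3)-2.\end{cases}$$ No upper bound on $i,j$ is required.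
   Context: $U_j$ denotes the Chebyshev polynomial of the second kind of degree $j$, i.e. $U_j(\cos\theta)=\frac{\sin((j+1)\theta)}{\sin\theta}$. *)

theory Defs
  imports Complex_Main
begin

fun chebU :: "nat \<Rightarrow> real \<Rightarrow> real" where
  "chebU 0 x = 1"
| "chebU (Suc 0) x = 2 * x"
| "chebU (Suc (Suc j)) x = 2 * x * chebU (Suc j) x - chebU j x"

definition xnode :: "nat \<Rightarrow> nat \<Rightarrow> real" where
  "xnode n m = cos (real m * pi / real (n + 2))"

definition ynode :: "nat \<Rightarrow> nat \<Rightarrow> nat \<Rightarrow> real" where
  "ynode n m k = (if odd m then cos (2 * real k * pi / real (n + 3))
                  else cos ((2 * real k - 1) * pi / real (n + 3)))"

definition Isum :: "nat \<Rightarrow> nat \<Rightarrow> nat \<Rightarrow> real" where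
  "Isum n i j = (\<Sum>m = 1..n+1. \<Sum>k = 1..n div 2 + 1.
      (1 - (xnode n m)^2) * (1 - (ynode n m k)^2) * chebU i (xnode n m) * chebU j (ynode n m k))"

definition Cn :: "nat \<Rightarrow> real" where
  "Cn n = 8 / (real (n + 2) * real (n + 3))"

end

theory Submission imports Defs begin

lemma chebU_sin: "chebU j (cos t) * sin t = sin ((real j + 1) * t)"
proof (induction j t rule: chebU.induct)
  case (1 x) then show ?case by simp
next
  case (2 x) then show ?case by (simp add: sin_double)
next
  case (3 j t)
  have e1: "sin ((real j + 3) * t) = sin ((real j + 2) * t + t)" by (simp add: algebra_simps)
  have e2: "sin ((real j + 1) * t) = sin ((real j + 2) * t - t)" by (simp add: algebra_simps)
  have "chebU (Suc (Suc j)) (cos t) * sin t = 2 * cos t * (chebU (Suc j) (cos t) * sin t) - chebU j (cos t) * sin t"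
    by (simp add: algebra_simps)
  also have "\<dots> = 2 * cos t * sin ((real j + 2) * t) - sin ((real j + 1) * t)"
    using 3 by (simp add: add.commute)
  also have "\<dots> = sin ((real j + 3) * t)"
    unfolding e1 e2 sin_add sin_diff by (simp add: algebra_simps)
  finally show ?case by (simp add: add.commute)
qed

lemma chebU_term: "(1 - (cos t)^2) * chebU j (cos t) = (cos (real j * t) - cos ((real j + 2) * t)) / 2"
proof -
  have "(1 - (cos t)^2) * chebU j (cos t) = sin t * (chebU j (cos t) * sin t)"
  proof -
    have "1 - (cos t)^2 = sin t * sin t" using sin_cos_squared_add[of t] by (simp add: power2_eq_square)
    thus ?thesis by simp
  qed
  also have "\<dots> = sin t * sin ((real j + 1) * t)" by (simp add: chebU_sin)
  also have "\<dots> = (cos (real j * t) - cos ((real j + 2) * t)) / 2"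
  proof -
    have a: "real j * t = (real j + 1) * t - t" by (simp add: algebra_simps)
    have b: "(real j + 2) * t = (real j + 1) * t + t" by (simp add: algebra_simps)
    show ?thesis unfolding a b cos_add cos_diff by (simp add: algebra_simps)
  qed
  finally show ?thesis .
qed

lemma tele1: "2 * sin (x/2) * (\<Sum>k=1..h. cos (real k * x)) = sin ((2 * real h + 1) * x / 2) - sin (x/2)"
proof (induction h)
  case 0 then show ?case by simp
next
  case (Suc h)
  have a: "(2 * real (Suc h) + 1) * x / 2 = (real (Suc h)) * x + x/2" by (simp add: field_simps)
  have b: "(2 * real h + 1) * x / 2 = (real (Suc h)) * x - x/2" by (simp add: field_simps)
  have "2 * sin (x/2) * (\<Sum>k=1..Suc h. cos (real k * x)) = 2 * sin (x/2) * (\<Sum>k=1..h. cos (real k * x)) + 2 * sin (x/2) * cos (real (Suc h) * x)"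
    by (simp add: algebra_simps)
  also have "\<dots> = sin ((2 * real (Suc h) + 1) * x / 2) - sin (x/2)"
  proof -
    have key: "2 * sin (x/2) * cos (real (Suc h) * x) = sin ((2 * real (Suc h) + 1) * x / 2) - sin ((2 * real h + 1) * x / 2)"
      unfolding a b sin_add sin_diff by (simp add: algebra_simps)
    show ?thesis using Suc key by simp
  qed
  finally show ?case .
qed

lemma tele2: "2 * sin z * (\<Sum>k=1..h. cos ((2 * real k - 1) * z)) = sin (2 * real h * z)"
proof (induction h)
  case 0 then show ?case by simp
next
  case (Suc h)
  have a: "2 * real (Suc h) * z = (2 * real (Suc h) - 1) * z + z" by (simp add: field_simps)
  have b: "2 * real h * z = (2 * real (Suc h) - 1) * z - z" by (simp add: field_simps)
  have "2 * sin z * (\<Sum>k=1..Suc h. cos ((2 * real k - 1) * z)) = 2 * sin z * (\<Sum>k=1..h. cos ((2 * real k - 1) * z)) + 2 * sin z * cos ((2 * real (Suc h) - 1) * z)"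
    by (simp add: algebra_simps)
  also have "\<dots> = sin (2 * real (Suc h) * z)"
  proof -
    have key: "2 * sin z * cos ((2 * real (Suc h) - 1) * z) = sin (2 * real (Suc h) * z) - sin (2 * real h * z)"
      unfolding a b sin_add sin_diff by (simp add: algebra_simps)
    show ?thesis using Suc key by simp
  qed
  finally show ?case .
qed

lemma ints_div_iff: assumes "N > 0" shows "real b / real N \<in> \<int> \<longleftrightarrow> N dvd b"
proof
  assume "real b / real N \<in> \<int>"
  then obtain z where z: "real b / real N = of_int z" by (auto elim: Ints_cases)
  hence "real b = real N * of_int z" using assms by (simp add: field_simps)
  hence "int b = int N * z" by (metis of_int_eq_iff of_int_mult of_int_of_nat_eq)
  thus "N dvd b" by (metis dvd_triv_left int_dvd_int_iff)
next
  assume "N dvd b" then obtain q where "b = N * q" by auto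
  thus "real b / real N \<in> \<int>" using assms by simp
qed

lemma cos_add_npi: "cos (x + real k * pi) = (-1)^k * cos x"
  by (simp add: cos_add)

lemma sin_npi_minus: "sin (real c * pi - y) = - ((-1)^c * sin y)"
  by (simp add: sin_diff)

lemma cancel_aux: fixes s S c :: real assumes "2 * s * S = - (c * s)" "s \<noteq> 0" shows "S = - c / 2"
proof -
  have "s * (2*S + c) = 0" using assms(1) by (simp add: algebra_simps)
  hence "2*S + c = 0" using assms(2) by simp
  thus ?thesis by simp
qed

definition dl :: "nat \<Rightarrow> nat \<Rightarrow> real" where
  "dl K c = (if K dvd c then 1 else 0)"

lemma LF: assumes N: "N = 2 * h + 1"
  shows "(\<Sum>k=1..h. cos (real b * (2 * real k * pi / real N))) = (real N * dl N b - 1) / 2"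
proof (cases "N dvd b")
  case True
  then obtain q where q: "b = N * q" by auto
  have "\<And>k. cos (real b * (2 * real k * pi / real N)) = 1"
  proof -
    fix k
    have e: "real b * (2 * real k * pi / real N) = 2 * real (k * q) * pi" using N q by (simp add: field_simps)
    show "cos (real b * (2 * real k * pi / real N)) = 1" unfolding e by (rule cos_2npi)
  qed
  then show ?thesis using True N by (simp add: dl_def)
next
  case False
  define x where "x = 2 * real b * pi / real N"
  have t: "\<And>k. real b * (2 * real k * pi / real N) = real k * x" unfolding x_def by (simp add: field_simps)
  have s0: "sin ((2 * real h + 1) * x / 2) = 0"
  proof -
    have "(2 * real h + 1) * x / 2 = real b * pi" unfolding x_def using N by (simp add: field_simps)
    thus ?thesis by simp
  qed
  have zeq: "x / 2 = (real b / real N) * pi" unfolding x_def by (simp add: field_simps)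
  have "N > 0" using N by simp
  hence "real b / real N \<notin> \<int>" using False ints_div_iff by blast
  hence "sin ((real b / real N) * pi) \<noteq> 0" using sin_times_pi_eq_0 by blast
  hence s1: "sin (x/2) \<noteq> 0" unfolding zeq .
  have "2 * sin (x/2) * (\<Sum>k=1..h. cos (real k * x)) = - (1 * sin (x/2))" using tele1[of x h] s0 by simp
  hence "(\<Sum>k=1..h. cos (real k * x)) = -1/2" using s1 by (rule cancel_aux)
  then show ?thesis using False unfolding t by (simp add: dl_def)
qed

lemma LFe: assumes N: "N = 2 * h + 1"
  shows "(\<Sum>k=1..h. cos (real b * ((2 * real k - 1) * pi / real N))) = (-1)^b * (real N * dl N b - 1) / 2"
proof (cases "N dvd b")
  case True
  then obtain q where q: "b = N * q" by auto
  have pb: "((-1::real)^b) = (-1)^q" using q N by (simp add: power_mult power_add)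
  have "\<And>k. k \<in> {1..h} \<Longrightarrow> cos (real b * ((2 * real k - 1) * pi / real N)) = (-1)^q"
  proof -
    fix k assume "k \<in> {1..h}"
    hence k: "k \<ge> 1" by auto
    have "real b * ((2 * real k - 1) * pi / real N) = real ((2 * k - 1) * q) * pi" using N q k
      by (simp add: field_simps of_nat_diff)
    moreover have "odd (2 * k - 1)" using k by presburger
    hence "(-1::real)^((2*k-1)*q) = (-1)^q" by (simp add: power_mult)
    ultimately show "cos (real b * ((2 * real k - 1) * pi / real N)) = (-1)^q"
      by (simp only: cos_npi)
  qed
  then have "(\<Sum>k=1..h. cos (real b * ((2 * real k - 1) * pi / real N))) = real h * (-1)^q" by simp
  then show ?thesis using True N pb by (simp add: dl_def)
next
  case False
  define z where "z = real b * pi / real N"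
  have t: "\<And>k. real b * ((2 * real k - 1) * pi / real N) = (2 * real k - 1) * z" unfolding z_def by (simp add: field_simps)
  have s0: "sin (2 * real h * z) = - ((-1)^b * sin z)"
  proof -
    have "2 * real h * z = real b * pi - z" unfolding z_def using N by (simp add: field_simps)
    thus ?thesis by (simp add: sin_npi_minus)
  qed
  have zeq: "z = (real b / real N) * pi" unfolding z_def by (simp add: field_simps)
  have "N > 0" using N by simp
  hence "real b / real N \<notin> \<int>" using False ints_div_iff by blast
  hence "sin ((real b / real N) * pi) \<noteq> 0" using sin_times_pi_eq_0 by blast
  hence s1: "sin z \<noteq> 0" unfolding zeq .
  have "2 * sin z * (\<Sum>k=1..h. cos ((2 * real k - 1) * z)) = - ((-1)^b * sin z)" using tele2[of z h] s0 by simp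
  hence "(\<Sum>k=1..h. cos ((2 * real k - 1) * z)) = - ((-1)^b) / 2" using s1 by (rule cancel_aux)
  then show ?thesis using False unfolding t by (simp add: dl_def)
qed

lemma LG: assumes M: "M > 0"
  shows "(\<Sum>m=1..M-1. cos (real c * (real m * pi / real M))) = real M * dl (2 * M) c - (1 + (-1)^c) / 2"
proof (cases "(2 * M) dvd c")
  case True
  then obtain q where q: "c = 2 * M * q" by auto
  have "\<And>m. cos (real c * (real m * pi / real M)) = 1"
  proof -
    fix m
    have e: "real c * (real m * pi / real M) = 2 * real (m * q) * pi" using M q by (simp add: field_simps)
    show "cos (real c * (real m * pi / real M)) = 1" unfolding e by (rule cos_2npi)
  qed
  then show ?thesis using True M q by (simp add: dl_def of_nat_diff)
next
  case False
  define x where "x = real c * pi / real M"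
  have t: "\<And>m. real c * (real m * pi / real M) = real m * x" unfolding x_def by (simp add: field_simps)
  have s0: "sin ((2 * real (M - 1) + 1) * x / 2) = - ((-1)^c * sin (x/2))"
  proof -
    have e: "(2 * real (M - 1) + 1) * x / 2 = real c * pi - x / 2" unfolding x_def using M by (simp add: field_simps of_nat_diff)
    show ?thesis unfolding e by (rule sin_npi_minus)
  qed
  have zeq: "x / 2 = (real c / real (2 * M)) * pi" unfolding x_def by (simp add: field_simps)
  have "2 * M > 0" using M by simp
  hence "real c / real (2 * M) \<notin> \<int>" using False ints_div_iff by blast
  hence "sin ((real c / real (2 * M)) * pi) \<noteq> 0" using sin_times_pi_eq_0 by blast
  hence s1: "sin (x/2) \<noteq> 0" unfolding zeq .
  have "2 * sin (x/2) * (\<Sum>m=1..M-1. cos (real m * x)) = - (((-1)^c + 1) * sin (x/2))" using tele1[of x "M-1"] s0 by (simp add: algebra_simps)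
  hence "(\<Sum>m=1..M-1. cos (real m * x)) = - ((-1)^c + 1) / 2" using s1 by (rule cancel_aux)
  then show ?thesis using False unfolding t by (simp add: dl_def field_simps)
qed

lemma sigma_shift:
  fixes a j m M :: nat assumes M: "M > 0"
  shows "(if odd m then 1 else (-1)^j) * cos (real a * (real m * pi / real M))
       = (-1)^j * cos (real (a + j * M) * (real m * pi / real M))"
proof -
  have e: "real (a + j * M) * (real m * pi / real M) = real a * (real m * pi / real M) + real (j * m) * pi"
    using M by (simp add: field_simps)
  have p: "(if odd m then 1 else (-1)^j) = (-1::real)^j * (-1)^(j*m)"
  proof (cases "odd m")
    case True
    hence "even (j + j * m)" by simp
    hence "(-1::real)^j * (-1)^(j*m) = 1" by (simp add: power_add[symmetric])
    thus ?thesis using True by simp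
  next
    case False thus ?thesis by simp
  qed
  show ?thesis unfolding e cos_add_npi p by simp
qed

lemma Isum_formula:
  assumes "even n"
  shows "Isum n i j = real (n+3) * real (n+2) / 8 * (-1)^j * (dl (n+3) j - dl (n+3) (j+2))
           * (dl (2*(n+2)) (i + j*(n+2)) - dl (2*(n+2)) (i+2+j*(n+2)))"
proof -
  define M where "M = n + 2"
  define N where "N = n + 3"
  define h where "h = n div 2 + 1"
  have Nh: "N = 2 * h + 1" using assms unfolding N_def h_def by auto
  have M0: "M > 0" unfolding M_def by simp
  define th where "th m = real m * pi / real M" for m :: nat
  define ph where "ph m k = (if odd m then 2 * real k * pi / real N else (2 * real k - 1) * pi / real N)" for m k :: nat
  define A where "A m = cos (real i * th m) - cos (real (i+2) * th m)" for m
  define B where "B m k = cos (real j * ph m k) - cos (real (j+2) * ph m k)" for m k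
  define F where "F b = (real N * dl N b - 1) / 2" for b
  define G where "G c = (\<Sum>m=1..M-1. cos (real c * (real m * pi / real M)))" for c
  define sg where "sg m = (if odd m then 1 else (-1::real)^j)" for m :: nat
  have summand: "(1 - (xnode n m)^2) * (1 - (ynode n m k)^2) * chebU i (xnode n m) * chebU j (ynode n m k)
      = A m * B m k / 4" for m k
  proof -
    have xn: "xnode n m = cos (th m)" unfolding xnode_def th_def M_def by simp
    have yn: "ynode n m k = cos (ph m k)" unfolding ynode_def ph_def N_def by simp
    have "(1 - (xnode n m)^2) * (1 - (ynode n m k)^2) * chebU i (xnode n m) * chebU j (ynode n m k)
      = ((1 - (cos (th m))^2) * chebU i (cos (th m))) * ((1 - (cos (ph m k))^2) * chebU j (cos (ph m k)))"
      unfolding xn yn by (simp add: algebra_simps)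
    also have "\<dots> = A m * B m k / 4" unfolding chebU_term A_def B_def by (simp add: add.commute)
    finally show ?thesis .
  qed
  have Bsum: "(\<Sum>k=1..n div 2 + 1. B m k) = sg m * (F j - F (j+2))" for m
  proof (cases "odd m")
    case True
    have "(\<Sum>k=1..n div 2 + 1. B m k) = (\<Sum>k=1..h. cos (real j * (2 * real k * pi / real N)))
         - (\<Sum>k=1..h. cos (real (j+2) * (2 * real k * pi / real N)))"
      unfolding B_def ph_def h_def using True by (simp add: sum_subtractf)
    also have "\<dots> = F j - F (j+2)" unfolding F_def using LF[OF Nh] by presburger
    finally show ?thesis using True unfolding sg_def by simp
  next
    case False
    have "(\<Sum>k=1..n div 2 + 1. B m k) = (\<Sum>k=1..h. cos (real j * ((2 * real k - 1) * pi / real N)))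
         - (\<Sum>k=1..h. cos (real (j+2) * ((2 * real k - 1) * pi / real N)))"
      unfolding B_def ph_def h_def using False by (simp add: sum_subtractf)
    also have "\<dots> = (-1)^j * (F j - F (j+2))" unfolding F_def LFe[OF Nh] by (simp add: algebra_simps)
    finally show ?thesis using False unfolding sg_def by simp
  qed
  have Asum: "(\<Sum>m=1..n+1. sg m * A m) = (-1)^j * (G (i + j*M) - G (i + 2 + j*M))"
  proof -
    have "(\<Sum>m=1..n+1. sg m * A m) = (\<Sum>m=1..M-1. (-1)^j * cos (real (i + j*M) * (real m * pi / real M))
          - (-1)^j * cos (real (i + 2 + j*M) * (real m * pi / real M)))"
    proof (rule sum.cong)
      show "{1..n+1} = {1..M-1}" unfolding M_def by simp
    next
      fix m
      show "sg m * A m = (-1)^j * cos (real (i + j*M) * (real m * pi / real M))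
          - (-1)^j * cos (real (i + 2 + j*M) * (real m * pi / real M))"
        unfolding sg_def A_def th_def right_diff_distrib sigma_shift[OF M0] by (rule refl)
    qed
    also have "\<dots> = (-1)^j * (G (i + j*M) - G (i + 2 + j*M))"
      unfolding G_def by (simp add: sum_subtractf sum_distrib_left right_diff_distrib)
    finally show ?thesis .
  qed
  have Gd: "G (i + j*M) - G (i + 2 + j*M) = real M * (dl (2*M) (i + j*M) - dl (2*M) (i + 2 + j*M))"
  proof -
    have "(-1::real)^(i + 2 + j*M) = (-1)^(i + j*M)" by simp
    thus ?thesis unfolding G_def LG[OF M0] by (simp add: algebra_simps)
  qed
  have "Isum n i j = (\<Sum>m=1..n+1. \<Sum>k=1..n div 2 + 1. A m * B m k / 4)"
    unfolding Isum_def summand by simp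
  also have "\<dots> = (\<Sum>m=1..n+1. A m * (\<Sum>k=1..n div 2 + 1. B m k) / 4)"
    by (intro sum.cong refl) (simp only: sum_distrib_left sum_divide_distrib mult.assoc times_divide_eq_right)
  also have "\<dots> = (F j - F (j+2)) / 4 * (\<Sum>m=1..n+1. sg m * A m)"
    unfolding Bsum sum_distrib_left by (intro sum.cong refl) (simp add: algebra_simps)
  also have "\<dots> = (F j - F (j+2)) / 4 * ((-1)^j * (real M * (dl (2*M) (i + j*M) - dl (2*M) (i + 2 + j*M))))"
    unfolding Asum Gd ..
  finally have I: "Isum n i j = (F j - F (j+2)) / 4 * ((-1)^j * (real M * (dl (2*M) (i + j*M) - dl (2*M) (i + 2 + j*M))))" .
  have Fd: "F j - F (j+2) = real N / 2 * (dl N j - dl N (j+2))" unfolding F_def by (simp add: field_simps)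
  show ?thesis unfolding M_def[symmetric] N_def[symmetric] I Fd by (simp add: field_simps)
qed

lemma no2: fixes M a :: nat assumes "M \<ge> 3" "M dvd a" shows "\<not> M dvd (a + 2)"
proof
  assume "M dvd (a+2)"
  hence "M dvd 2" using assms(2) by (metis dvd_add_right_iff)
  hence "M \<le> 2" by (simp add: dvd_imp_le)
  thus False using assms(1) by simp
qed

lemma Pval1: fixes N j u :: nat assumes "N \<ge> 3" "j = u * N" shows "dl N j - dl N (j+2) = 1"
  using no2[OF assms(1), of j] assms by (simp add: dl_def)

lemma Pval2: fixes N j u :: nat assumes "N \<ge> 3" "j + 2 = u * N" shows "dl N j - dl N (j+2) = -1"
proof -
  have "N dvd j + 2" using assms by simp
  hence "\<not> N dvd j" using no2[OF assms(1), of j] by blast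
  thus ?thesis using assms by (simp add: dl_def)
qed

lemma dl_even: fixes M x :: nat assumes "M > 0" shows "dl (2*M) (x*M) = (if even x then 1 else 0)"
proof -
  have "(2*M dvd x*M) = (2 dvd x)" using assms by simp
  thus ?thesis by (simp add: dl_def)
qed

lemma Qval1: fixes M i j v :: nat assumes "M \<ge> 3" "i = v * M"
  shows "dl (2*M) (i + j*M) - dl (2*M) (i+2+j*M) = (if even (v + j) then 1 else 0)"
proof -
  have e: "i + j*M = (v+j)*M" using assms by (simp add: algebra_simps)
  have "M dvd i + j*M" using e by simp
  hence "\<not> M dvd (i + j*M) + 2" using no2[OF assms(1)] by blast
  hence "\<not> 2*M dvd i + 2 + j*M" by (metis add.commute add.left_commute dvd_mult_right)
  thus ?thesis using dl_even[of M "v+j"] assms e by (simp add: dl_def)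
qed

lemma Qval2: fixes M i j v :: nat assumes "M \<ge> 3" "i + 2 = v * M"
  shows "dl (2*M) (i + j*M) - dl (2*M) (i+2+j*M) = - (if even (v + j) then 1 else 0)"
proof -
  have e: "i + 2 + j*M = (v+j)*M" using assms by (simp add: algebra_simps)
  have "M dvd i + 2 + j*M" using e by simp
  hence "\<not> M dvd (i + j*M)" using no2[OF assms(1), of "i + j*M"] by (metis add.commute add.left_commute)
  hence "\<not> 2*M dvd i + j*M" by (metis dvd_mult_right)
  thus ?thesis using dl_even[of M "v+j"] assms e by (simp add: dl_def)
qed

lemma combine: fixes v u j :: nat assumes "even j = even u"
  shows "(-1::real)^j * (if even (v + j) then 1 else 0) * 2 = (-1)^v + (-1)^u"
  using assms by (cases "even v"; cases "even u") auto

lemma int_to_nat: fixes i K :: nat and \<nu> :: int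
  assumes "int i = \<nu> * int K" "K > 0" shows "\<exists>v. \<nu> = int v \<and> i = v * K"
proof -
  have "\<nu> \<ge> 0" using assms by (metis of_nat_0_le_iff of_nat_0_less_iff zero_le_mult_iff not_le)
  then obtain v where v: "\<nu> = int v" by (metis nonneg_eq_int)
  hence "int i = int (v * K)" using assms by simp
  hence "i = v * K" by (simp only: of_nat_eq_iff)
  thus ?thesis using v by blast
qed

lemma int_to_nat2: fixes i K :: nat and \<nu> :: int
  assumes "int i = \<nu> * int K - 2" "K > 0" shows "\<exists>v. \<nu> = int v \<and> i + 2 = v * K"
proof -
  have "int (i + 2) = \<nu> * int K" using assms by simp
  thus ?thesis using int_to_nat[of "i+2" \<nu> K] assms by blast
qed

theorem proposition3:
  fixes n i j :: nat
  assumes "n > 0" and "even n"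
  shows "((\<not> (n + 2) dvd i \<and> \<not> (n + 2) dvd (i + 2)) \<or>
          (\<not> (n + 3) dvd j \<and> \<not> (n + 3) dvd (j + 2)) \<longrightarrow> Isum n i j = 0)
    \<and> (\<forall>\<nu> \<mu> :: int.
         (int i = \<nu> * int (n + 2) \<and> int j = \<mu> * int (n + 3) \<longrightarrow>
            Isum n i j = inverse (2 * Cn n) * ((-1) powi \<nu> + (-1) powi \<mu>))
       \<and> (int i = \<nu> * int (n + 2) \<and> int j = \<mu> * int (n + 3) - 2 \<longrightarrow>
            Isum n i j = - inverse (2 * Cn n) * ((-1) powi \<nu> + (-1) powi \<mu>))
       \<and> (int i = \<nu> * int (n + 2) - 2 \<and> int j = \<mu> * int (n + 3) \<longrightarrow>
            Isum n i j = - inverse (2 * Cn n) * ((-1) powi \<nu> + (-1) powi \<mu>))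
       \<and> (int i = \<nu> * int (n + 2) - 2 \<and> int j = \<mu> * int (n + 3) - 2 \<longrightarrow>
            Isum n i j = inverse (2 * Cn n) * ((-1) powi \<nu> + (-1) powi \<mu>)))"
proof -
  define M where "M = n + 2"
  define N where "N = n + 3"
  have M3: "M \<ge> 3" and N3: "N \<ge> 3" and M0: "M > 0" and N0: "N > 0"
    using assms unfolding M_def N_def by auto
  have oddN: "odd N" using assms unfolding N_def by simp
  define P where "P = dl N j - dl N (j+2)"
  define Q where "Q = dl (2*M) (i + j*M) - dl (2*M) (i+2+j*M)"
  have F: "Isum n i j = real N * real M / 8 * (-1)^j * P * Q"
    unfolding P_def Q_def M_def N_def using Isum_formula[OF assms(2)] by simp
  have Cinv: "inverse (2 * Cn n) = real N * real M / 16"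
    unfolding Cn_def M_def N_def by (simp add: field_simps)
  have part1: "((\<not> M dvd i \<and> \<not> M dvd (i + 2)) \<or> (\<not> N dvd j \<and> \<not> N dvd (j + 2)) \<longrightarrow> Isum n i j = 0)"
  proof
    assume h: "(\<not> M dvd i \<and> \<not> M dvd (i + 2)) \<or> (\<not> N dvd j \<and> \<not> N dvd (j + 2))"
    show "Isum n i j = 0"
    proof (cases "\<not> M dvd i \<and> \<not> M dvd (i + 2)")
      case True
      have a: "\<not> 2*M dvd i + j*M"
      proof
        assume "2*M dvd i + j*M"
        hence "M dvd i + j*M" by (metis dvd_mult_right)
        hence "M dvd i" by (simp add: dvd_add_left_iff)
        thus False using True by simp
      qed
      have b: "\<not> 2*M dvd i + 2 + j*M"
      proof
        assume "2*M dvd i + 2 + j*M"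
        hence "M dvd (i + 2) + j*M" by (metis dvd_mult_right)
        hence "M dvd i + 2" using dvd_add_left_iff[of M "j*M" "i+2"] by simp
        thus False using True by simp
      qed
      have "Q = 0" unfolding Q_def dl_def using a b by simp
      thus ?thesis using F by simp
    next
      case False
      hence "\<not> N dvd j \<and> \<not> N dvd (j + 2)" using h by blast
      hence "P = 0" unfolding P_def dl_def by simp
      thus ?thesis using F by simp
    qed
  qed
  have part2: "\<forall>\<nu> \<mu> :: int.
         (int i = \<nu> * int M \<and> int j = \<mu> * int N \<longrightarrow>
            Isum n i j = inverse (2 * Cn n) * ((-1) powi \<nu> + (-1) powi \<mu>))
       \<and> (int i = \<nu> * int M \<and> int j = \<mu> * int N - 2 \<longrightarrow>
            Isum n i j = - inverse (2 * Cn n) * ((-1) powi \<nu> + (-1) powi \<mu>))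
       \<and> (int i = \<nu> * int M - 2 \<and> int j = \<mu> * int N \<longrightarrow>
            Isum n i j = - inverse (2 * Cn n) * ((-1) powi \<nu> + (-1) powi \<mu>))
       \<and> (int i = \<nu> * int M - 2 \<and> int j = \<mu> * int N - 2 \<longrightarrow>
            Isum n i j = inverse (2 * Cn n) * ((-1) powi \<nu> + (-1) powi \<mu>))"
  proof (intro allI conjI impI)
    fix \<nu> \<mu> :: int
    {
      assume h: "int i = \<nu> * int M \<and> int j = \<mu> * int N"
      obtain v where v: "\<nu> = int v" "i = v * M" using int_to_nat[of i \<nu> M] h M0 by blast
      obtain u where u: "\<mu> = int u" "j = u * N" using int_to_nat[of j \<mu> N] h N0 by blast
      have ej: "even j = even u" using u oddN by simp
      have "Isum n i j = real N * real M / 16 * ((-1::real)^j * (if even (v + j) then 1 else 0) * 2)"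
        unfolding F P_def Q_def Pval1[OF N3 u(2)] Qval1[OF M3 v(2)] by simp
      thus "Isum n i j = inverse (2 * Cn n) * ((-1) powi \<nu> + (-1) powi \<mu>)"
        unfolding combine[OF ej] Cinv v(1) u(1) by simp
    next
      assume h: "int i = \<nu> * int M \<and> int j = \<mu> * int N - 2"
      obtain v where v: "\<nu> = int v" "i = v * M" using int_to_nat[of i \<nu> M] h M0 by blast
      obtain u where u: "\<mu> = int u" "j + 2 = u * N" using int_to_nat2[of j \<mu> N] h N0 by blast
      have ej: "even j = even u" using u oddN by (metis even_add even_mult_iff even_numeral)
      have "Isum n i j = - (real N * real M / 16 * ((-1::real)^j * (if even (v + j) then 1 else 0) * 2))"
        unfolding F P_def Q_def Pval2[OF N3 u(2)] Qval1[OF M3 v(2)] by simp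
      thus "Isum n i j = - inverse (2 * Cn n) * ((-1) powi \<nu> + (-1) powi \<mu>)"
        unfolding combine[OF ej] Cinv v(1) u(1) by simp
    next
      assume h: "int i = \<nu> * int M - 2 \<and> int j = \<mu> * int N"
      obtain v where v: "\<nu> = int v" "i + 2 = v * M" using int_to_nat2[of i \<nu> M] h M0 by blast
      obtain u where u: "\<mu> = int u" "j = u * N" using int_to_nat[of j \<mu> N] h N0 by blast
      have ej: "even j = even u" using u oddN by simp
      have "Isum n i j = - (real N * real M / 16 * ((-1::real)^j * (if even (v + j) then 1 else 0) * 2))"
        unfolding F P_def Q_def Pval1[OF N3 u(2)] Qval2[OF M3 v(2)] by simp
      thus "Isum n i j = - inverse (2 * Cn n) * ((-1) powi \<nu> + (-1) powi \<mu>)"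
        unfolding combine[OF ej] Cinv v(1) u(1) by simp
    next
      assume h: "int i = \<nu> * int M - 2 \<and> int j = \<mu> * int N - 2"
      obtain v where v: "\<nu> = int v" "i + 2 = v * M" using int_to_nat2[of i \<nu> M] h M0 by blast
      obtain u where u: "\<mu> = int u" "j + 2 = u * N" using int_to_nat2[of j \<mu> N] h N0 by blast
      have ej: "even j = even u" using u oddN by (metis even_add even_mult_iff even_numeral)
      have "Isum n i j = real N * real M / 16 * ((-1::real)^j * (if even (v + j) then 1 else 0) * 2)"
        unfolding F P_def Q_def Pval2[OF N3 u(2)] Qval2[OF M3 v(2)] by simp
      thus "Isum n i j = inverse (2 * Cn n) * ((-1) powi \<nu> + (-1) powi \<mu>)"
        unfolding combine[OF ej] Cinv v(1) u(1) by simp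
    }
  qed
  show ?thesis using part1 part2 unfolding M_def N_def by blast
qed

end
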